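(* Let $R$ be a P$v$MD and $J\subseteq I$ nonzero ideals of $R$. The following are equivalent: (1) $J$ is a $t$-reduction of $I$, i.e. $(JI^n)_t=(I^{n+1})_t$ for some $n\ge1$; (2) $(JR_M)(IR_M)=(IR_M)^2$ for every maximal $t$-ideal $M$ of $R$; (3) $(JI)_t=(I^2)_t$.
   Context: For a domain $R$ with quotient field $K$ and nonzero fractional ideal $I$: $I^{-1}=(R:I)=\{x\in K:xI\subseteq R\}$, $I_v=(I^{-1})^{-1}$, $I_t=\bigcup J_v$ over finitely generated subideals $J\subseteq I$; a maximal $t$-ideal is an ideal maximal among proper integral ideals $P$ with $P_t=P$. $R$ is a P$v$MD (Prüfer $v$-multiplication domain) if every nonzero finitely generated ideal $I$ satisfies $(II^{-1})_t=R$ (equivalently, $R_M$ is a valuation domain for each maximal $t$-ideal $M$). *)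

theory Defs
  imports Main "HOL-Computational_Algebra.Fraction_Field"
begin

text \<open>The domain R is the type 'a :: idom, embedded in its quotient field K = 'a fract.
  All (fractional) ideals are represented as subsets of K.\<close>

definition Rset :: "'a::idom fract set" where
  "Rset = range (\<lambda>a. Fract a 1)"

definition span_over :: "'a::idom fract set \<Rightarrow> 'a fract set \<Rightarrow> 'a fract set" where
  "span_over S X = {(\<Sum>x\<in>F. c x * x) | F c. finite F \<and> F \<subseteq> X \<and> (\<forall>x\<in>F. c x \<in> S)}"

definition ideal_prod :: "'a::idom fract set \<Rightarrow> 'a fract set \<Rightarrow> 'a fract set \<Rightarrow> 'a fract set" where
  "ideal_prod S A B = span_over S {a * b | a b. a \<in> A \<and> b \<in> B}"

primrec ideal_pow :: "'a::idom fract set \<Rightarrow> 'a fract set \<Rightarrow> nat \<Rightarrow> 'a fract set" where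
  "ideal_pow S A 0 = S"
| "ideal_pow S A (Suc n) = ideal_prod S A (ideal_pow S A n)"

definition is_ideal :: "'a::idom fract set \<Rightarrow> bool" where
  "is_ideal I \<longleftrightarrow> I \<subseteq> Rset \<and> 0 \<in> I \<and> (\<forall>x\<in>I. \<forall>y\<in>I. x + y \<in> I)
     \<and> (\<forall>r\<in>Rset. \<forall>x\<in>I. r * x \<in> I)"

definition fin_gen :: "'a::idom fract set \<Rightarrow> bool" where
  "fin_gen I \<longleftrightarrow> (\<exists>F. finite F \<and> I = span_over Rset F)"

definition ideal_inv :: "'a::idom fract set \<Rightarrow> 'a fract set" where
  "ideal_inv I = {x. \<forall>y\<in>I. x * y \<in> Rset}"

definition v_op :: "'a::idom fract set \<Rightarrow> 'a fract set" where
  "v_op I = ideal_inv (ideal_inv I)"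

definition t_op :: "'a::idom fract set \<Rightarrow> 'a fract set" where
  "t_op I = \<Union>{v_op J | J. J \<subseteq> I \<and> fin_gen J}"

definition max_t_ideal :: "'a::idom fract set \<Rightarrow> bool" where
  "max_t_ideal M \<longleftrightarrow> is_ideal M \<and> M \<noteq> Rset \<and> t_op M = M \<and>
     (\<forall>N. is_ideal N \<and> N \<noteq> Rset \<and> t_op N = N \<and> M \<subseteq> N \<longrightarrow> N = M)"

definition PvMD :: "'a::idom itself \<Rightarrow> bool" where
  "PvMD _ \<longleftrightarrow> (\<forall>I::'a fract set. is_ideal I \<and> I \<noteq> {0} \<and> fin_gen I \<longrightarrow>
      t_op (ideal_prod Rset I (ideal_inv I)) = Rset)"

definition loc :: "'a::idom fract set \<Rightarrow> 'a fract set" where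
  "loc M = {a / s | a s. a \<in> Rset \<and> s \<in> Rset \<and> s \<notin> M}"

definition ext_loc :: "'a::idom fract set \<Rightarrow> 'a fract set \<Rightarrow> 'a fract set" where
  "ext_loc M I = span_over (loc M) I"

end

theory Submission
  imports Defs
begin


lemma Rset_0[simp]: "0 \<in> Rset" unfolding Rset_def by (metis Zero_fract_def rangeI)
lemma Rset_1[simp]: "1 \<in> Rset" unfolding Rset_def by (metis One_fract_def rangeI)
lemma Rset_add: "x \<in> Rset \<Longrightarrow> y \<in> Rset \<Longrightarrow> x + y \<in> Rset"
  unfolding Rset_def by (auto simp: add_fract)
lemma Rset_mult: "x \<in> Rset \<Longrightarrow> y \<in> Rset \<Longrightarrow> x * y \<in> Rset"
  unfolding Rset_def by (auto)
lemma Rset_pow: "x \<in> Rset \<Longrightarrow> x ^ n \<in> Rset"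
  by (induction n) (auto simp: Rset_mult)
lemma Rset_prod: "(\<And>i. i \<in> A \<Longrightarrow> f i \<in> Rset) \<Longrightarrow> prod f A \<in> Rset"
  by (induction A rule: infinite_finite_induct) (auto simp: Rset_mult)

definition Rmod :: "'a::idom fract set \<Rightarrow> 'a fract set \<Rightarrow> bool" where
  "Rmod S Z \<longleftrightarrow> 0 \<in> Z \<and> (\<forall>x\<in>Z. \<forall>y\<in>Z. x + y \<in> Z) \<and> (\<forall>s\<in>S. \<forall>z\<in>Z. s * z \<in> Z)"

lemma span_sub:
  assumes "Rmod S Z" "X \<subseteq> Z"
  shows "span_over S X \<subseteq> Z"
proof
  fix y assume "y \<in> span_over S X"
  then obtain F c where y: "y = (\<Sum>x\<in>F. c x * x)" "finite F" "F \<subseteq> X" "\<forall>x\<in>F. c x \<in> S"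
    unfolding span_over_def by blast
  have "F \<subseteq> X \<longrightarrow> (\<forall>x\<in>F. c x \<in> S) \<longrightarrow> (\<Sum>x\<in>F. c x * x) \<in> Z"
    using y(2) by (induction F rule: finite_induct) (use assms in \<open>auto simp: Rmod_def\<close>)
  then show "y \<in> Z" using y by blast
qed

lemma span_incl: "1 \<in> S \<Longrightarrow> X \<subseteq> span_over S X"
proof
  fix x assume "1 \<in> S" "x \<in> X"
  then show "x \<in> span_over S X" unfolding span_over_def
    by (intro CollectI exI[of _ "{x}"] exI[of _ "\<lambda>_. 1"]) auto
qed

lemma span_0: "0 \<in> span_over S X"
  unfolding span_over_def by (intro CollectI exI[of _ "{}"]) auto

lemma span_mono: "X \<subseteq> Y \<Longrightarrow> span_over S X \<subseteq> span_over S Y"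
  unfolding span_over_def by blast

lemma span_empty: "span_over S {} = {0}"
  unfolding span_over_def by auto

lemma span_Rmod:
  assumes S0: "0 \<in> S" and Sadd: "\<And>a b. a \<in> S \<Longrightarrow> b \<in> S \<Longrightarrow> a + b \<in> S"
    and Smult: "\<And>a b. a \<in> S \<Longrightarrow> b \<in> S \<Longrightarrow> a * b \<in> S"
  shows "Rmod S (span_over S X)"
  unfolding Rmod_def
proof (intro conjI ballI)
  show "0 \<in> span_over S X" by (rule span_0)
next
  fix x y assume "x \<in> span_over S X" "y \<in> span_over S X"
  then obtain F c G d where x: "x = (\<Sum>z\<in>F. c z * z)" "finite F" "F \<subseteq> X" "\<forall>z\<in>F. c z \<in> S"
    and y: "y = (\<Sum>z\<in>G. d z * z)" "finite G" "G \<subseteq> X" "\<forall>z\<in>G. d z \<in> S"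
    unfolding span_over_def by blast
  define c' where "c' z = (if z \<in> F then c z else 0)" for z
  define d' where "d' z = (if z \<in> G then d z else 0)" for z
  have "x = (\<Sum>z\<in>F \<union> G. c' z * z)"
    unfolding x c'_def using x(2) y(2)
    by (subst sum.mono_neutral_right[of "F \<union> G" F]) (auto)
  moreover have "y = (\<Sum>z\<in>F \<union> G. d' z * z)"
    unfolding y d'_def using x(2) y(2)
    by (subst sum.mono_neutral_right[of "F \<union> G" G]) (auto)
  ultimately have "x + y = (\<Sum>z\<in>F \<union> G. (c' z + d' z) * z)"
    by (simp add: sum.distrib distrib_right)
  moreover have "\<forall>z\<in>F \<union> G. c' z + d' z \<in> S"
    using x(4) y(4) S0 Sadd by (auto simp: c'_def d'_def)
  ultimately show "x + y \<in> span_over S X"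
    unfolding span_over_def using x(2,3) y(2,3)
    by (intro CollectI exI[of _ "F \<union> G"] exI[of _ "\<lambda>z. c' z + d' z"]) auto
next
  fix s x assume s: "s \<in> S" and "x \<in> span_over S X"
  then obtain F c where x: "x = (\<Sum>z\<in>F. c z * z)" "finite F" "F \<subseteq> X" "\<forall>z\<in>F. c z \<in> S"
    unfolding span_over_def by blast
  have "s * x = (\<Sum>z\<in>F. (s * c z) * z)" unfolding x by (simp add: sum_distrib_left mult.assoc)
  moreover have "\<forall>z\<in>F. s * c z \<in> S" using x(4) s Smult by auto
  ultimately show "s * x \<in> span_over S X" unfolding span_over_def using x(2,3)
    by (intro CollectI exI[of _ F] exI[of _ "\<lambda>z. s * c z"]) auto
qed

lemma Rmod_Rset_span: "Rmod Rset (span_over Rset X)"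
  by (rule span_Rmod) (auto simp: Rset_add Rset_mult)


abbreviation sp :: "'a::idom fract set \<Rightarrow> 'a fract set" where "sp X \<equiv> span_over Rset X"

lemma is_ideal_iff: "is_ideal A \<longleftrightarrow> Rmod Rset A \<and> A \<subseteq> Rset"
  unfolding is_ideal_def Rmod_def by (intro iffI conjI; elim conjE; assumption)

lemma inv_Rmod: "Rmod Rset (ideal_inv X)"
  unfolding Rmod_def ideal_inv_def
proof (intro conjI ballI CollectI)
  fix x y z :: "'a fract" assume "x \<in> {x. \<forall>y\<in>X. x * y \<in> Rset}" "y \<in> {x. \<forall>y\<in>X. x * y \<in> Rset}" "z \<in> X"
  then show "(x + y) * z \<in> Rset" by (simp add: distrib_right Rset_add)
next
  fix s x z :: "'a fract" assume "s \<in> Rset" "x \<in> {x. \<forall>y\<in>X. x * y \<in> Rset}" "z \<in> X"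
  then show "s * x * z \<in> Rset" by (metis (mono_tags) Rset_mult mem_Collect_eq mult.assoc)
qed simp

lemma inv_anti: "X \<subseteq> Y \<Longrightarrow> ideal_inv Y \<subseteq> ideal_inv X"
  unfolding ideal_inv_def by blast

lemma sub_vop: "X \<subseteq> v_op X"
  unfolding v_op_def ideal_inv_def by (auto simp: mult.commute)

lemma vop_mono: "X \<subseteq> Y \<Longrightarrow> v_op X \<subseteq> v_op Y"
  unfolding v_op_def by (intro inv_anti)

lemma inv3: "ideal_inv (v_op X) = ideal_inv X"
proof
  show "ideal_inv (v_op X) \<subseteq> ideal_inv X" by (rule inv_anti[OF sub_vop])
  show "ideal_inv X \<subseteq> ideal_inv (v_op X)" using sub_vop[of "ideal_inv X"] unfolding v_op_def .
qed

lemma vop_vop: "v_op (v_op X) = v_op X"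
  by (metis inv3 v_op_def)

lemma vop_Rmod: "Rmod Rset (v_op X)"
  unfolding v_op_def by (rule inv_Rmod)

lemma fin_gen_sp: "finite F \<Longrightarrow> fin_gen (sp F)"
  unfolding fin_gen_def by blast

lemma t_op_char:
  assumes "Rmod Rset A"
  shows "x \<in> t_op A \<longleftrightarrow> (\<exists>F. finite F \<and> F \<subseteq> A \<and> x \<in> v_op (sp F))"
proof
  assume "x \<in> t_op A"
  then obtain J where J: "J \<subseteq> A" "fin_gen J" "x \<in> v_op J" unfolding t_op_def by blast
  then obtain F where F: "finite F" "J = sp F" unfolding fin_gen_def by blast
  have "F \<subseteq> J" unfolding F(2) by (rule span_incl) simp
  then show "\<exists>F. finite F \<and> F \<subseteq> A \<and> x \<in> v_op (sp F)" using F J by blast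
next
  assume "\<exists>F. finite F \<and> F \<subseteq> A \<and> x \<in> v_op (sp F)"
  then obtain F where F: "finite F" "F \<subseteq> A" "x \<in> v_op (sp F)" by blast
  have "sp F \<subseteq> A" by (rule span_sub[OF assms F(2)])
  then show "x \<in> t_op A" unfolding t_op_def using F fin_gen_sp by blast
qed

lemma t_op_mono: "A \<subseteq> B \<Longrightarrow> t_op A \<subseteq> t_op B"
  unfolding t_op_def by blast

lemma sub_t: assumes "Rmod Rset A" shows "A \<subseteq> t_op A"
proof
  fix x assume "x \<in> A"
  then show "x \<in> t_op A" unfolding t_op_char[OF assms]
    using sub_vop[of "sp {x}"] span_incl[of Rset "{x}"]
    by (intro exI[of _ "{x}"]) auto
qed

lemma Rmod_mem: "Rmod S Z \<Longrightarrow> 0 \<in> Z"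
  "Rmod S Z \<Longrightarrow> x \<in> Z \<Longrightarrow> y \<in> Z \<Longrightarrow> x + y \<in> Z"
  "Rmod S Z \<Longrightarrow> s \<in> S \<Longrightarrow> x \<in> Z \<Longrightarrow> s * x \<in> Z"
  unfolding Rmod_def by auto

lemma t_Rmod: assumes A: "Rmod Rset A" shows "Rmod Rset (t_op A)"
  unfolding Rmod_def
proof (intro conjI ballI)
  show "0 \<in> t_op A" using sub_t[OF A] Rmod_mem(1)[OF A] by blast
next
  fix x y assume "x \<in> t_op A" "y \<in> t_op A"
  then obtain F G where F: "finite F" "F \<subseteq> A" "x \<in> v_op (sp F)"
    and G: "finite G" "G \<subseteq> A" "y \<in> v_op (sp G)" unfolding t_op_char[OF A] by blast
  have "x \<in> v_op (sp (F \<union> G))" "y \<in> v_op (sp (F \<union> G))"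
    using F(3) G(3) vop_mono[OF span_mono] by blast+
  then have "x + y \<in> v_op (sp (F \<union> G))" using Rmod_mem(2)[OF vop_Rmod] by blast
  then show "x + y \<in> t_op A" unfolding t_op_char[OF A] using F G by (intro exI[of _ "F \<union> G"]) auto
next
  fix s x :: "'a fract" assume s: "s \<in> Rset" "x \<in> t_op A"
  then obtain F where F: "finite F" "F \<subseteq> A" "x \<in> v_op (sp F)" unfolding t_op_char[OF A] by blast
  then have "s * x \<in> v_op (sp F)" using Rmod_mem(3)[OF vop_Rmod] s by blast
  then show "s * x \<in> t_op A" unfolding t_op_char[OF A] using F by blast
qed

lemma t_idem: assumes A: "Rmod Rset A" shows "t_op (t_op A) = t_op A"
proof
  show "t_op A \<subseteq> t_op (t_op A)" by (rule sub_t[OF t_Rmod[OF A]])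
  show "t_op (t_op A) \<subseteq> t_op A"
  proof
    fix x assume "x \<in> t_op (t_op A)"
    then have "\<exists>F. finite F \<and> F \<subseteq> t_op A \<and> x \<in> v_op (sp F)"
      by (simp only: t_op_char[OF t_Rmod[OF A]])
    then obtain F where F: "finite F" "F \<subseteq> t_op A" "x \<in> v_op (sp F)" by blast
    have "\<forall>f\<in>F. \<exists>G. finite G \<and> G \<subseteq> A \<and> f \<in> v_op (sp G)"
    proof
      fix f assume "f \<in> F"
      then have "f \<in> t_op A" using F(2) by blast
      then show "\<exists>G. finite G \<and> G \<subseteq> A \<and> f \<in> v_op (sp G)" by (simp only: t_op_char[OF A])
    qed
    from bchoice[OF this] obtain G where G: "\<forall>f\<in>F. finite (G f) \<and> G f \<subseteq> A \<and> f \<in> v_op (sp (G f))"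
      by blast
    define H where "H = (\<Union>f\<in>F. G f)"
    have H1: "finite H" unfolding H_def using F(1) G by simp
    have H2: "H \<subseteq> A" unfolding H_def using G by (simp add: UN_subset_iff)
    have "F \<subseteq> v_op (sp H)"
    proof
      fix f assume f: "f \<in> F"
      then have "G f \<subseteq> H" unfolding H_def by blast
      then have "v_op (sp (G f)) \<subseteq> v_op (sp H)" by (intro vop_mono span_mono)
      then show "f \<in> v_op (sp H)" using G f by blast
    qed
    then have "sp F \<subseteq> v_op (sp H)" by (rule span_sub[OF vop_Rmod])
    then have "v_op (sp F) \<subseteq> v_op (v_op (sp H))" by (rule vop_mono)
    then have "v_op (sp F) \<subseteq> v_op (sp H)" by (simp only: vop_vop)
    then show "x \<in> t_op A" unfolding t_op_char[OF A] using H1 H2 F(3) by blast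
  qed
qed

lemma vop_sub_R: "X \<subseteq> Rset \<Longrightarrow> v_op X \<subseteq> Rset"
proof
  fix x assume "X \<subseteq> Rset" "x \<in> v_op X"
  then have "1 \<in> ideal_inv X" unfolding ideal_inv_def by auto
  then have "x * 1 \<in> Rset" using \<open>x \<in> v_op X\<close> unfolding v_op_def ideal_inv_def by blast
  then show "x \<in> Rset" by simp
qed

lemma t_sub_R: assumes "A \<subseteq> Rset" shows "t_op A \<subseteq> Rset"
  unfolding t_op_def using vop_sub_R assms by blast

lemma t_ideal: "is_ideal A \<Longrightarrow> is_ideal (t_op A)"
  unfolding is_ideal_iff using t_Rmod t_sub_R by blast



lemma Rmod_Rset: "Rmod Rset Rset"
  unfolding Rmod_def by (auto simp: Rset_add Rset_mult)

lemma Rmod_pre: assumes "Rmod Rset Y" shows "Rmod Rset {w. c * w \<in> Y}"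
  using assms unfolding Rmod_def by (simp add: distrib_left mult.left_commute)

lemma maxt_basic:
  assumes "max_t_ideal M"
  shows "is_ideal M" "Rmod Rset M" "M \<subseteq> Rset" "t_op M = M" "1 \<notin> M" "M \<noteq> Rset"
proof -
  show I: "is_ideal M" "t_op M = M" "M \<noteq> Rset" using assms unfolding max_t_ideal_def by auto
  then show R: "Rmod Rset M" "M \<subseteq> Rset" unfolding is_ideal_iff by auto
  show "1 \<notin> M"
  proof
    assume "1 \<in> M"
    then have "Rset \<subseteq> M" using Rmod_mem(3)[OF R(1), of _ 1] by force
    then show False using R(2) I(3) by blast
  qed
qed

lemma scale_vop:
  assumes "1 \<in> v_op (sp F)"
  shows "x \<in> v_op (sp ((*) x ` F))"
  unfolding v_op_def
proof (subst ideal_inv_def, rule CollectI, rule ballI)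
  fix y assume y: "y \<in> ideal_inv (sp ((*) x ` F))"
  have "F \<subseteq> {w. (x * y) * w \<in> Rset}"
  proof
    fix f assume "f \<in> F"
    then have "x * f \<in> sp ((*) x ` F)" using span_incl[of Rset "(*) x ` F"] by auto
    then have "y * (x * f) \<in> Rset" using y unfolding ideal_inv_def by (metis (no_types, lifting) mem_Collect_eq mult.commute)
    then show "f \<in> {w. (x * y) * w \<in> Rset}" by (simp add: ac_simps)
  qed
  then have "sp F \<subseteq> {w. (x * y) * w \<in> Rset}" by (rule span_sub[OF Rmod_pre[OF Rmod_Rset]])
  then have "x * y \<in> ideal_inv (sp F)" unfolding ideal_inv_def by blast
  then have "1 * (x * y) \<in> Rset" using assms unfolding v_op_def ideal_inv_def by blast
  then show "x * y \<in> Rset" by simp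
qed

lemma t_char_ideal: "is_ideal A \<Longrightarrow> x \<in> t_op A \<longleftrightarrow> (\<exists>F. finite F \<and> F \<subseteq> A \<and> x \<in> v_op (sp F))"
  using t_op_char is_ideal_iff by blast

lemma maxt_prime:
  assumes M: "max_t_ideal M" and a: "a \<in> Rset" and b: "b \<in> Rset" and ab: "a * b \<in> M"
  shows "a \<in> M \<or> b \<in> M"
proof (rule ccontr)
  assume "\<not> (a \<in> M \<or> b \<in> M)"
  then have na: "a \<notin> M" and nb: "b \<notin> M" by auto
  note Mb = maxt_basic[OF M]
  define N where "N = sp (M \<union> {a})"
  have NR: "N \<subseteq> Rset" unfolding N_def using Mb(3) a by (intro span_sub[OF Rmod_Rset]) auto
  have Nid: "is_ideal N" unfolding is_ideal_iff N_def using NR N_def Rmod_Rset_span by blast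
  define T where "T = t_op N"
  have Tid: "is_ideal T" unfolding T_def by (rule t_ideal[OF Nid])
  have Tt: "t_op T = T" unfolding T_def using t_idem Nid is_ideal_iff by blast
  have MN: "M \<union> {a} \<subseteq> N" unfolding N_def by (rule span_incl) simp
  have NT: "N \<subseteq> T" unfolding T_def using sub_t Nid is_ideal_iff by blast
  have "T = Rset"
  proof (rule ccontr)
    assume "T \<noteq> Rset"
    then have "T = M" using M Tid Tt MN NT unfolding max_t_ideal_def by blast
    then show False using MN NT na by blast
  qed
  then have "1 \<in> T" by simp
  then obtain F where F: "finite F" "F \<subseteq> N" "1 \<in> v_op (sp F)"
    unfolding T_def t_char_ideal[OF Nid] by blast
  have "N \<subseteq> {w. b * w \<in> M}"
    unfolding N_def
  proof (rule span_sub[OF Rmod_pre[OF Mb(2)]])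
    show "M \<union> {a} \<subseteq> {w. b * w \<in> M}"
      using Rmod_mem(3)[OF Mb(2) b] ab by (auto simp: mult.commute)
  qed
  then have "(*) b ` F \<subseteq> M" using F(2) by blast
  moreover have "finite ((*) b ` F)" using F(1) by simp
  moreover have "b \<in> v_op (sp ((*) b ` F))" by (rule scale_vop[OF F(3)])
  ultimately have "b \<in> t_op M" unfolding t_char_ideal[OF Mb(1)] by blast
  then show False using Mb(4) nb by simp
qed



lemma PV_unit:
  fixes M G :: "'a::idom fract set"
  assumes P: "PvMD TYPE('a)" and M: "max_t_ideal M" and G: "is_ideal G" "fin_gen G" "G \<noteq> {0}"
  shows "\<exists>f\<in>G. \<exists>g\<in>ideal_inv G. f * g \<notin> M"
proof (rule ccontr)
  assume "\<not> ?thesis"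
  then have all: "{a * b | a b. a \<in> G \<and> b \<in> ideal_inv G} \<subseteq> M" by blast
  note Mb = maxt_basic[OF M]
  have "ideal_prod Rset G (ideal_inv G) \<subseteq> M"
    unfolding ideal_prod_def by (rule span_sub[OF Mb(2) all])
  then have "t_op (ideal_prod Rset G (ideal_inv G)) \<subseteq> M" using t_op_mono Mb(4) by blast
  moreover have "t_op (ideal_prod Rset G (ideal_inv G)) = Rset" using P G unfolding PvMD_def by blast
  ultimately show False using Mb(5) by auto
qed

lemma LOC:
  fixes M A :: "'a::idom fract set"
  assumes P: "PvMD TYPE('a)" and M: "max_t_ideal M" and A: "is_ideal A" and x: "x \<in> t_op A"
  shows "\<exists>s\<in>Rset. s \<notin> M \<and> s * x \<in> A"
proof -
  note Mb = maxt_basic[OF M]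
  obtain F where F: "finite F" "F \<subseteq> A" "x \<in> v_op (sp F)" using x unfolding t_char_ideal[OF A] by blast
  define G where "G = sp F"
  have AR: "Rmod Rset A" "A \<subseteq> Rset" using A is_ideal_iff by auto
  have GA: "G \<subseteq> A" unfolding G_def by (rule span_sub[OF AR(1) F(2)])
  have Gid: "is_ideal G" unfolding is_ideal_iff G_def using GA AR Rmod_Rset_span G_def by blast
  have Gfg: "fin_gen G" unfolding G_def using fin_gen_sp F(1) by blast
  show ?thesis
  proof (cases "x = 0")
    case True
    then show ?thesis using Rmod_mem(1)[OF AR(1)] Mb(5) by (intro bexI[of _ 1]) auto
  next
    case xnz: False
    show ?thesis
    proof (cases "G = {0}")
      case True
      have "\<forall>y\<in>ideal_inv G. x * y \<in> Rset" using F(3) unfolding G_def[symmetric] v_op_def ideal_inv_def by blast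
      moreover have "inverse (x * x) \<in> ideal_inv G" unfolding ideal_inv_def True by simp
      ultimately have "x * inverse (x * x) \<in> Rset" by blast
      then have xi: "inverse x \<in> Rset" using xnz by (simp add: field_simps)
      have "{0} \<subseteq> M" using Mb(2) Rmod_mem(1) by blast
      then have "G \<subseteq> M" using True by simp
      then have "v_op G \<subseteq> t_op M" unfolding t_op_def using Gfg by blast
      then have "x \<in> M" using F(3) Mb(4) G_def by blast
      then have "inverse x * x \<in> M" using Rmod_mem(3)[OF Mb(2) xi] by blast
      then show ?thesis using xnz Mb(5) by simp
    next
      case False
      obtain f g where fg: "f \<in> G" "g \<in> ideal_inv G" "f * g \<notin> M"
        using PV_unit[OF P M Gid Gfg False] by blast
      have sR: "f * g \<in> Rset" using fg(1,2) unfolding ideal_inv_def by (simp add: mult.commute)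
      have "x * g \<in> Rset" using F(3) fg(2) unfolding G_def[symmetric] v_op_def ideal_inv_def by blast
      then have "(x * g) * f \<in> A" using Rmod_mem(3)[OF AR(1)] fg(1) GA by blast
      then have "(f * g) * x \<in> A" by (simp add: ac_simps)
      then show ?thesis using sR fg(3) by blast
    qed
  qed
qed

lemma inv_mem: "g \<in> ideal_inv G \<Longrightarrow> y \<in> G \<Longrightarrow> g * y \<in> Rset"
  by (simp add: ideal_inv_def)

definition D :: "'a::idom fract set \<Rightarrow> 'a fract \<Rightarrow> 'a fract \<Rightarrow> bool" where
  "D M x y \<longleftrightarrow> (\<exists>s\<in>Rset. s \<notin> M \<and> (\<exists>r\<in>Rset. s * y = r * x))"

lemma VP:
  fixes M :: "'a::idom fract set"
  assumes P: "PvMD TYPE('a)" and M: "max_t_ideal M" and x: "x \<in> Rset" and y: "y \<in> Rset"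
  shows "D M x y \<or> D M y x"
proof -
  note Mb = maxt_basic[OF M]
  have one: "1 \<in> Rset" "1 \<notin> M" using Mb(5) by auto
  show ?thesis
  proof (cases "x = 0 \<or> y = 0")
    case True
    then show ?thesis
    proof
      assume "x = 0"
      then have "1 * x = 0 * y" by simp
      then have "D M y x" unfolding D_def using one Rset_0 by blast
      then show ?thesis by blast
    next
      assume "y = 0"
      then have "1 * y = 0 * x" by simp
      then have "D M x y" unfolding D_def using one Rset_0 by blast
      then show ?thesis by blast
    qed
  next
    case False
    define G where "G = sp {x, y}"
    have xyG: "{x, y} \<subseteq> G" unfolding G_def by (rule span_incl) simp
    have "sp {x, y} \<subseteq> Rset" using x y by (intro span_sub[OF Rmod_Rset]) auto
    then have Gid: "is_ideal G" unfolding is_ideal_iff G_def using Rmod_Rset_span by blast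
    have Gfg: "fin_gen G" unfolding G_def by (rule fin_gen_sp) simp
    have Gnz: "G \<noteq> {0}" using xyG False by auto
    obtain f g where fg: "f \<in> G" "g \<in> ideal_inv G" "f * g \<notin> M"
      using PV_unit[OF P M Gid Gfg Gnz] by blast
    have gx: "g * x \<in> Rset" "g * y \<in> Rset" using inv_mem[OF fg(2)] xyG by auto
    have "x * g \<notin> M \<or> y * g \<notin> M"
    proof (rule ccontr)
      assume "\<not> ?thesis"
      then have "{x, y} \<subseteq> {w. g * w \<in> M}" by (simp add: mult.commute)
      then have "G \<subseteq> {w. g * w \<in> M}" unfolding G_def by (rule span_sub[OF Rmod_pre[OF Mb(2)]])
      then have "g * f \<in> M" using fg(1) by blast
      then show False using fg(3) by (simp add: mult.commute)
    qed
    then show ?thesis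
    proof
      assume "x * g \<notin> M"
      moreover have "(g * x) * y = (g * y) * x" by (simp add: ac_simps)
      moreover have "g * x \<notin> M" using \<open>x * g \<notin> M\<close> by (simp add: mult.commute)
      ultimately have "D M x y" unfolding D_def using gx by blast
      then show ?thesis by blast
    next
      assume "y * g \<notin> M"
      moreover have "(g * y) * x = (g * x) * y" by (simp add: ac_simps)
      moreover have "g * y \<notin> M" using \<open>y * g \<notin> M\<close> by (simp add: mult.commute)
      ultimately have "D M y x" unfolding D_def using gx by blast
      then show ?thesis by blast
    qed
  qed
qed



lemma proper_one: fixes P :: "'a::idom fract set" assumes "is_ideal P" "P \<noteq> Rset" shows "1 \<notin> P"
proof
  assume "1 \<in> P"
  have R: "Rmod Rset P" "P \<subseteq> Rset" using assms(1) is_ideal_iff by auto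
  have "Rset \<subseteq> P"
  proof
    fix r :: "'a fract" assume "r \<in> Rset"
    then have "r * 1 \<in> P" using Rmod_mem(3)[OF R(1)] \<open>1 \<in> P\<close> by blast
    then show "r \<in> P" by simp
  qed
  then show False using R(2) assms(2) by blast
qed

lemma exists_maxt:
  assumes N: "is_ideal N" "t_op N = N" "N \<noteq> Rset"
  shows "\<exists>M. max_t_ideal M \<and> N \<subseteq> M"
proof -
  define A where "A = {P. is_ideal P \<and> P \<noteq> Rset \<and> t_op P = P \<and> N \<subseteq> P}"
  have "A \<noteq> {}" using N unfolding A_def by blast
  moreover have "\<Union>C \<in> A" if C: "C \<noteq> {}" "subset.chain A C" for C
  proof -
    have CA: "C \<subseteq> A" and tot: "\<And>X Y. X \<in> C \<Longrightarrow> Y \<in> C \<Longrightarrow> X \<subseteq> Y \<or> Y \<subseteq> X"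
      using C(2) unfolding subset_chain_def by auto
    have mem: "\<And>P. P \<in> C \<Longrightarrow> is_ideal P \<and> P \<noteq> Rset \<and> t_op P = P \<and> N \<subseteq> P"
      using CA unfolding A_def by blast
    obtain P0 where P0: "P0 \<in> C" using C(1) by blast
    have sub: "\<Union>C \<subseteq> Rset" using mem is_ideal_iff by blast
    have rm: "Rmod Rset (\<Union>C)"
      unfolding Rmod_def
    proof (intro conjI ballI)
      show "0 \<in> \<Union>C" using mem[OF P0] is_ideal_iff Rmod_mem(1) P0 by blast
    next
      fix x y assume "x \<in> \<Union>C" "y \<in> \<Union>C"
      then obtain X Y where XY: "X \<in> C" "Y \<in> C" "x \<in> X" "y \<in> Y" by blast
      show "x + y \<in> \<Union>C"
      proof (cases "X \<subseteq> Y")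
        case True
        then have "x + y \<in> Y" using mem[OF XY(2)] XY is_ideal_iff Rmod_mem(2) by blast
        then show ?thesis using XY by blast
      next
        case False
        then have "Y \<subseteq> X" using tot XY by blast
        then have "x + y \<in> X" using mem[OF XY(1)] XY is_ideal_iff Rmod_mem(2) by blast
        then show ?thesis using XY by blast
      qed
    next
      fix s x :: "'a fract" assume "s \<in> Rset" "x \<in> \<Union>C"
      then obtain X where "X \<in> C" "x \<in> X" by blast
      then have "s * x \<in> X" using mem is_ideal_iff Rmod_mem(3) \<open>s \<in> Rset\<close> by blast
      then show "s * x \<in> \<Union>C" using \<open>X \<in> C\<close> by blast
    qed
    have id: "is_ideal (\<Union>C)" using rm sub is_ideal_iff by blast
    have "1 \<notin> \<Union>C" using mem proper_one by blast
    then have ne: "\<Union>C \<noteq> Rset" by auto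
    have "t_op (\<Union>C) \<subseteq> \<Union>C"
    proof
      fix x assume "x \<in> t_op (\<Union>C)"
      then obtain F where F: "finite F" "F \<subseteq> \<Union>C" "x \<in> v_op (sp F)"
        unfolding t_char_ideal[OF id] by blast
      obtain P where P: "P \<in> C" "F \<subseteq> P" using finite_subset_Union_chain[OF F(1,2) C(1,2)] by blast
      have "x \<in> t_op P" unfolding t_char_ideal[OF conjunct1[OF mem[OF P(1)]]] using F P by blast
      then show "x \<in> \<Union>C" using mem[OF P(1)] P(1) by blast
    qed
    moreover have "\<Union>C \<subseteq> t_op (\<Union>C)" by (rule sub_t[OF rm])
    ultimately have "t_op (\<Union>C) = \<Union>C" by blast
    moreover have "N \<subseteq> \<Union>C" using mem[OF P0] P0 by blast
    ultimately show "\<Union>C \<in> A" unfolding A_def using id ne by blast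
  qed
  ultimately obtain M where M: "M \<in> A" "\<forall>X\<in>A. M \<subseteq> X \<longrightarrow> X = M"
    using subset_Zorn_nonempty[of A] by blast
  have "max_t_ideal M" unfolding max_t_ideal_def
  proof (intro conjI allI impI)
    show "is_ideal M" "M \<noteq> Rset" "t_op M = M" using M(1) unfolding A_def by auto
  next
    fix P assume "is_ideal P \<and> P \<noteq> Rset \<and> t_op P = P \<and> M \<subseteq> P"
    moreover then have "P \<in> A" using M(1) unfolding A_def by blast
    ultimately show "P = M" using M(2) by blast
  qed
  then show ?thesis using M(1) unfolding A_def by blast
qed

lemma GLOB:
  assumes A: "is_ideal A"
    and H: "\<forall>M. max_t_ideal M \<longrightarrow> (\<exists>s\<in>Rset. s \<notin> M \<and> s * x \<in> A)"
  shows "x \<in> t_op A"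
proof -
  have AR: "Rmod Rset A" "A \<subseteq> Rset" using A is_ideal_iff by auto
  define C where "C = Rset \<inter> {w. x * w \<in> A}"
  have rmC: "Rmod Rset C" unfolding C_def using Rmod_pre[OF AR(1), of x] Rmod_Rset
    unfolding Rmod_def by (intro conjI ballI) (auto)
  have Cid: "is_ideal C" unfolding is_ideal_iff using rmC C_def by blast
  define T where "T = t_op C"
  have Tid: "is_ideal T" unfolding T_def by (rule t_ideal[OF Cid])
  have Tt: "t_op T = T" unfolding T_def using t_idem rmC by blast
  have CT: "C \<subseteq> T" unfolding T_def by (rule sub_t[OF rmC])
  have "T = Rset"
  proof (rule ccontr)
    assume "T \<noteq> Rset"
    then obtain M where M: "max_t_ideal M" "T \<subseteq> M" using exists_maxt[OF Tid Tt] by blast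
    then obtain s where s: "s \<in> Rset" "s \<notin> M" "s * x \<in> A" using H by blast
    then have "s \<in> C" unfolding C_def by (simp add: mult.commute)
    then show False using CT M(2) s(2) by blast
  qed
  then have "1 \<in> T" by simp
  then obtain F where F: "finite F" "F \<subseteq> C" "1 \<in> v_op (sp F)"
    unfolding T_def t_char_ideal[OF Cid] by blast
  have "(*) x ` F \<subseteq> A" using F(2) unfolding C_def by blast
  moreover have "finite ((*) x ` F)" using F(1) by simp
  moreover have "x \<in> v_op (sp ((*) x ` F))" by (rule scale_vop[OF F(3)])
  ultimately show "x \<in> t_op A" unfolding t_char_ideal[OF A] by blast
qed



definition fr :: "'a::idom fract set \<Rightarrow> 'a fract set \<Rightarrow> 'a fract set" where
  "fr M Y = {y / s | y s. y \<in> Y \<and> s \<in> Rset \<and> s \<notin> M}"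

lemma loc_fr: "loc M = fr M Rset" by (simp add: loc_def fr_def)

lemma SM_mult: assumes M: "max_t_ideal M" and "s \<in> Rset" "s \<notin> M" "t \<in> Rset" "t \<notin> M"
  shows "s * t \<notin> M" using maxt_prime[OF M] assms by blast

lemma SM_nz: assumes M: "max_t_ideal M" and "s \<notin> M" shows "s \<noteq> 0"
  using maxt_basic(2)[OF M] Rmod_mem(1) assms by blast

lemma fr_Rmod:
  assumes M: "max_t_ideal M" and Y: "Rmod Rset Y"
  shows "Rmod (loc M) (fr M Y)"
  unfolding Rmod_def
proof (intro conjI ballI)
  have "(0::'a fract) / 1 \<in> fr M Y" unfolding fr_def using Rmod_mem(1)[OF Y] maxt_basic(5)[OF M] Rset_1 by blast
  then show "0 \<in> fr M Y" by simp
next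
  fix x y assume "x \<in> fr M Y" "y \<in> fr M Y"
  then obtain a s b t where ab: "x = a / s" "a \<in> Y" "s \<in> Rset" "s \<notin> M" "y = b / t" "b \<in> Y" "t \<in> Rset" "t \<notin> M"
    unfolding fr_def by blast
  have nz: "s \<noteq> 0" "t \<noteq> 0" using SM_nz[OF M] ab by auto
  have "x + y = (t * a + s * b) / (s * t)" using nz ab by (simp add: field_simps)
  moreover have "t * a + s * b \<in> Y" using Rmod_mem[OF Y] ab by blast
  moreover have "s * t \<in> Rset" "s * t \<notin> M" using ab SM_mult[OF M] Rset_mult by auto
  ultimately show "x + y \<in> fr M Y" unfolding fr_def by blast
next
  fix c y assume "c \<in> loc M" "y \<in> fr M Y"
  then obtain a s b t where ab: "c = a / s" "a \<in> Rset" "s \<in> Rset" "s \<notin> M" "y = b / t" "b \<in> Y" "t \<in> Rset" "t \<notin> M"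
    unfolding fr_def loc_def by blast
  have "c * y = (a * b) / (s * t)" using ab by simp
  moreover have "a * b \<in> Y" using Rmod_mem(3)[OF Y] ab by blast
  moreover have "s * t \<in> Rset" "s * t \<notin> M" using ab SM_mult[OF M] Rset_mult by auto
  ultimately show "c * y \<in> fr M Y" unfolding fr_def by blast
qed

lemma fr_incl: assumes M: "max_t_ideal M" shows "Y \<subseteq> fr M Y"
proof
  fix y assume "y \<in> Y"
  then have "y / 1 \<in> fr M Y" unfolding fr_def using maxt_basic(5)[OF M] Rset_1 by blast
  then show "y \<in> fr M Y" by simp
qed

lemma fr_mono: "Y \<subseteq> Z \<Longrightarrow> fr M Y \<subseteq> fr M Z" unfolding fr_def by blast

lemma loc_Rmod: assumes M: "max_t_ideal M" shows "Rmod (loc M) (loc M)"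
  using fr_Rmod[OF M Rmod_Rset] by (simp add: loc_fr)

lemma loc_closed: assumes M: "max_t_ideal M"
  shows "0 \<in> loc M" "a \<in> loc M \<Longrightarrow> b \<in> loc M \<Longrightarrow> a + b \<in> loc M"
    "a \<in> loc M \<Longrightarrow> b \<in> loc M \<Longrightarrow> a * b \<in> loc M" "1 \<in> loc M"
  using loc_Rmod[OF M] Rmod_mem apply blast
  using loc_Rmod[OF M] Rmod_mem apply blast
  using loc_Rmod[OF M] Rmod_mem apply blast
  using fr_incl[OF M, of Rset] unfolding loc_fr by auto

lemma span_loc_Rmod: assumes M: "max_t_ideal M" shows "Rmod (loc M) (span_over (loc M) X)"
  by (rule span_Rmod) (use loc_closed[OF M] in auto)

lemma fr_sp_sub:
  assumes M: "max_t_ideal M" and XX: "X \<subseteq> X'"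
  shows "fr M (sp X) \<subseteq> span_over (loc M) X'"
proof
  fix z assume "z \<in> fr M (sp X)"
  then obtain y s where ys: "z = y / s" "y \<in> sp X" "s \<in> Rset" "s \<notin> M" unfolding fr_def by blast
  then obtain F c where F: "y = (\<Sum>x\<in>F. c x * x)" "finite F" "F \<subseteq> X" "\<forall>x\<in>F. c x \<in> Rset"
    unfolding span_over_def by blast
  have "z = (\<Sum>x\<in>F. (c x / s) * x)" unfolding ys(1) F(1) by (simp add: sum_divide_distrib)
  moreover have "\<forall>x\<in>F. c x / s \<in> loc M" using F(4) ys(3,4) unfolding loc_def by blast
  ultimately show "z \<in> span_over (loc M) X'" unfolding span_over_def using F(2,3) XX
    by (intro CollectI exI[of _ F] exI[of _ "\<lambda>x. c x / s"]) auto
qed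

lemma ext_loc_fr:
  assumes M: "max_t_ideal M" and I: "Rmod Rset I"
  shows "ext_loc M I = fr M I"
proof
  show "ext_loc M I \<subseteq> fr M I" unfolding ext_loc_def
    by (rule span_sub[OF fr_Rmod[OF M I] fr_incl[OF M]])
  have "fr M I \<subseteq> fr M (sp I)" by (rule fr_mono[OF span_incl]) simp
  also have "\<dots> \<subseteq> span_over (loc M) I" by (rule fr_sp_sub[OF M]) simp
  finally show "fr M I \<subseteq> ext_loc M I" unfolding ext_loc_def .
qed

lemma prod_loc:
  assumes M: "max_t_ideal M" and A: "Rmod Rset A" and B: "Rmod Rset B"
  shows "ideal_prod (loc M) (fr M A) (fr M B) = fr M (ideal_prod Rset A B)"
proof
  have rm: "Rmod Rset (ideal_prod Rset A B)" unfolding ideal_prod_def by (rule Rmod_Rset_span)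
  show "ideal_prod (loc M) (fr M A) (fr M B) \<subseteq> fr M (ideal_prod Rset A B)"
    unfolding ideal_prod_def[of "loc M"]
  proof (rule span_sub[OF fr_Rmod[OF M rm]])
    show "{a * b |a b. a \<in> fr M A \<and> b \<in> fr M B} \<subseteq> fr M (ideal_prod Rset A B)"
    proof
      fix z assume "z \<in> {a * b |a b. a \<in> fr M A \<and> b \<in> fr M B}"
      then obtain a s b t where ab: "z = (a / s) * (b / t)" "a \<in> A" "s \<in> Rset" "s \<notin> M" "b \<in> B" "t \<in> Rset" "t \<notin> M"
        unfolding fr_def by blast
      have "a * b \<in> ideal_prod Rset A B" unfolding ideal_prod_def
        using span_incl[of Rset "{a * b |a b. a \<in> A \<and> b \<in> B}"] ab by auto
      moreover have "z = (a * b) / (s * t)" using ab by simp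
      moreover have "s * t \<in> Rset" "s * t \<notin> M" using ab SM_mult[OF M] Rset_mult by auto
      ultimately show "z \<in> fr M (ideal_prod Rset A B)" unfolding fr_def by blast
    qed
  qed
  have "{a * b |a b. a \<in> A \<and> b \<in> B} \<subseteq> {a * b |a b. a \<in> fr M A \<and> b \<in> fr M B}"
    using fr_incl[OF M, of A] fr_incl[OF M, of B] by blast
  then show "fr M (ideal_prod Rset A B) \<subseteq> ideal_prod (loc M) (fr M A) (fr M B)"
    unfolding ideal_prod_def by (rule fr_sp_sub[OF M])
qed

lemma prod_R: assumes I: "Rmod Rset I" shows "ideal_prod Rset I Rset = I"
proof
  show "ideal_prod Rset I Rset \<subseteq> I" unfolding ideal_prod_def
  proof (rule span_sub[OF I])
    show "{a * b |a b. a \<in> I \<and> b \<in> Rset} \<subseteq> I"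
    proof
      fix z assume "z \<in> {a * b |a b. a \<in> I \<and> b \<in> Rset}"
      then obtain a b where ab: "z = a * b" "a \<in> I" "b \<in> Rset" by blast
      then have "b * a \<in> I" using Rmod_mem(3)[OF I] by blast
      then show "z \<in> I" using ab(1) by (simp add: mult.commute)
    qed
  qed
  show "I \<subseteq> ideal_prod Rset I Rset"
  proof
    fix i assume "i \<in> I"
    then have "i * 1 \<in> {a * b |a b. a \<in> I \<and> b \<in> Rset}" using Rset_1 by blast
    then show "i \<in> ideal_prod Rset I Rset" unfolding ideal_prod_def
      using span_incl[of Rset] by fastforce
  qed
qed

lemma Rmod_prod: "Rmod Rset (ideal_prod Rset A B)"
  unfolding ideal_prod_def by (rule Rmod_Rset_span)

lemma pow2_R: assumes I: "Rmod Rset I" shows "ideal_pow Rset I 2 = ideal_prod Rset I I"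
  using prod_R[OF I] by (simp add: numeral_2_eq_2)

lemma pow2_loc: assumes M: "max_t_ideal M" and I: "Rmod Rset I"
  shows "ideal_pow (loc M) (fr M I) 2 = fr M (ideal_prod Rset I I)"
proof -
  have "ideal_prod (loc M) (fr M I) (loc M) = ideal_prod (loc M) (fr M I) (fr M Rset)"
    by (rule arg_cong[OF loc_fr])
  also have "\<dots> = fr M (ideal_prod Rset I Rset)" by (rule prod_loc[OF M I Rmod_Rset])
  also have "\<dots> = fr M I" by (simp only: prod_R[OF I])
  finally have "ideal_prod (loc M) (fr M I) (loc M) = fr M I" .
  then show ?thesis by (simp add: numeral_2_eq_2 prod_loc[OF M I I])
qed

lemma FR_EQ:
  assumes M: "max_t_ideal M" and YZ: "Y \<subseteq> Z" and Y: "Rmod Rset Y"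
  shows "fr M Y = fr M Z \<longleftrightarrow> (\<forall>z\<in>Z. \<exists>s\<in>Rset. s \<notin> M \<and> s * z \<in> Y)"
proof
  assume eq: "fr M Y = fr M Z"
  show "\<forall>z\<in>Z. \<exists>s\<in>Rset. s \<notin> M \<and> s * z \<in> Y"
  proof
    fix z assume "z \<in> Z"
    then have "z \<in> fr M Y" using eq fr_incl[OF M] by blast
    then obtain y s where ys: "z = y / s" "y \<in> Y" "s \<in> Rset" "s \<notin> M" unfolding fr_def by blast
    have "s \<noteq> 0" using SM_nz[OF M ys(4)] .
    then have "s * z = y" using ys(1) by simp
    then show "\<exists>s\<in>Rset. s \<notin> M \<and> s * z \<in> Y" using ys by blast
  qed
next
  assume H: "\<forall>z\<in>Z. \<exists>s\<in>Rset. s \<notin> M \<and> s * z \<in> Y"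
  show "fr M Y = fr M Z"
  proof
    show "fr M Y \<subseteq> fr M Z" by (rule fr_mono[OF YZ])
    show "fr M Z \<subseteq> fr M Y"
    proof
      fix w assume "w \<in> fr M Z"
      then obtain z t where zt: "w = z / t" "z \<in> Z" "t \<in> Rset" "t \<notin> M" unfolding fr_def by blast
      obtain s where s: "s \<in> Rset" "s \<notin> M" "s * z \<in> Y" using H zt(2) by blast
      have "s \<noteq> 0" using SM_nz[OF M s(2)] .
      then have "w = (s * z) / (s * t)" using zt(1) by simp
      moreover have "s * t \<in> Rset" "s * t \<notin> M" using s zt SM_mult[OF M] Rset_mult by auto
      ultimately show "w \<in> fr M Y" unfolding fr_def using s(3) by blast
    qed
  qed
qed



lemma pow_Rmod: "Rmod Rset (ideal_pow Rset I n)"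
  by (cases n) (simp_all add: Rmod_Rset Rmod_prod)

lemma pow_R: assumes "I \<subseteq> Rset" shows "ideal_pow Rset I n \<subseteq> Rset"
proof (induction n)
  case 0 then show ?case by simp
next
  case (Suc n)
  show ?case unfolding ideal_pow.simps ideal_prod_def
  proof (rule span_sub[OF Rmod_Rset])
    show "{a * b |a b. a \<in> I \<and> b \<in> ideal_pow Rset I n} \<subseteq> Rset"
      using assms Suc Rset_mult by blast
  qed
qed

lemma prod_mem: "a \<in> A \<Longrightarrow> b \<in> B \<Longrightarrow> a * b \<in> ideal_prod Rset A B"
  unfolding ideal_prod_def using span_incl[of Rset "{a * b |a b. a \<in> A \<and> b \<in> B}"] Rset_1 by blast

lemma pow_mem: "e \<in> I \<Longrightarrow> e ^ n \<in> ideal_pow Rset I n"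
  by (induction n) (simp_all add: prod_mem)

lemma SM_pow: assumes M: "max_t_ideal M" and "t \<in> Rset" "t \<notin> M" shows "t ^ n \<notin> M"
proof (induction n)
  case 0 then show ?case using maxt_basic(5)[OF M] by simp
next
  case (Suc n)
  then show ?case using SM_mult[OF M, of t "t ^ n"] assms Rset_pow[of t n] by simp
qed

lemma SM_prod: assumes M: "max_t_ideal M" and "\<And>i. i \<in> A \<Longrightarrow> f i \<in> Rset \<and> f i \<notin> M"
  shows "prod f A \<notin> M"
  using assms(2)
proof (induction A rule: infinite_finite_induct)
  case (infinite A) then show ?case using maxt_basic(5)[OF M] by simp
next
  case empty then show ?case using maxt_basic(5)[OF M] by simp
next
  case (insert x F)
  have fx: "f x \<in> Rset" "f x \<notin> M" using insert.prems by auto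
  have p1: "prod f F \<notin> M" by (rule insert.IH) (simp add: insert.prems)
  have p2: "prod f F \<in> Rset" by (rule Rset_prod) (simp add: insert.prems)
  have "f x * prod f F \<notin> M" by (rule SM_mult[OF M fx p2 p1])
  then show ?case using insert.hyps by simp
qed

lemma M_prod: assumes M: "max_t_ideal M" and A: "finite A" "i \<in> A" "f i \<in> M"
  and R: "\<And>i. i \<in> A \<Longrightarrow> f i \<in> Rset"
  shows "prod f A \<in> M"
proof -
  have eq: "prod f A = f i * prod f (A - {i})" using A(1,2) by (rule prod.remove)
  have r: "prod f (A - {i}) \<in> Rset" by (rule Rset_prod) (simp add: R)
  have "prod f (A - {i}) * f i \<in> M" by (rule Rmod_mem(3)[OF maxt_basic(2)[OF M] r A(3)])
  then show ?thesis using eq by (simp add: mult.commute)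
qed

context
  fixes M :: "'a::idom fract set"
  assumes P: "PvMD TYPE('a)" and M: "max_t_ideal M"
begin

lemma comb:
  assumes "s1 \<in> Rset" "s1 \<notin> M" "r1 \<in> Rset" "s1 * y1 = r1 * z1"
    "s2 \<in> Rset" "s2 \<notin> M" "r2 \<in> Rset" "s2 * y2 = r2 * z2"
    "t \<in> Rset" "t \<notin> M" "q \<in> Rset" "t * z2 = q * z1"
  shows "\<exists>s\<in>Rset. s \<notin> M \<and> (\<exists>r\<in>Rset. s * (y1 + y2) = r * z1)"
proof -
  have "(s1 * s2 * t) * (y1 + y2) = s2 * t * (s1 * y1) + s1 * t * (s2 * y2)" by (simp add: algebra_simps)
  also have "\<dots> = s2 * t * (r1 * z1) + s1 * t * (r2 * z2)" using assms(4,8) by simp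
  also have "\<dots> = s2 * t * r1 * z1 + s1 * r2 * (t * z2)" by (simp add: algebra_simps)
  also have "\<dots> = s2 * t * r1 * z1 + s1 * r2 * (q * z1)" using assms(12) by simp
  also have "\<dots> = (s2 * t * r1 + s1 * r2 * q) * z1" by (simp add: algebra_simps)
  finally have eq: "(s1 * s2 * t) * (y1 + y2) = (s2 * t * r1 + s1 * r2 * q) * z1" .
  have a: "s1 * s2 \<in> Rset" "s1 * s2 \<notin> M" using assms(1,2,5,6) Rset_mult SM_mult[OF M] by blast+
  have b: "s1 * s2 * t \<in> Rset" "s1 * s2 * t \<notin> M" using a assms(9,10) Rset_mult SM_mult[OF M] by blast+
  have c: "s2 * t * r1 + s1 * r2 * q \<in> Rset"
    by (intro Rset_add Rset_mult) (simp_all add: assms(1,3,5,7,9,11))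
  show ?thesis using eq b c by blast
qed

lemma ST:
  assumes A: "A \<subseteq> Rset" "0 \<in> A" and B: "B \<subseteq> Rset" "0 \<in> B" and y: "y \<in> ideal_prod Rset A B"
  shows "\<exists>a\<in>A. \<exists>b\<in>B. \<exists>s\<in>Rset. s \<notin> M \<and> (\<exists>r\<in>Rset. s * y = r * (a * b))"
proof -
  define Z where "Z = {y. \<exists>a\<in>A. \<exists>b\<in>B. \<exists>s\<in>Rset. s \<notin> M \<and> (\<exists>r\<in>Rset. s * y = r * (a * b))}"
  have one: "1 \<in> Rset" "1 \<notin> M" using maxt_basic(5)[OF M] by auto
  have "Rmod Rset Z" unfolding Rmod_def
  proof (intro conjI ballI)
    have "(1::'a fract) * 0 = 0 * (0 * 0)" by simp
    then show "0 \<in> Z" unfolding Z_def using A B one Rset_0 by blast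
  next
    fix y1 y2 assume "y1 \<in> Z" "y2 \<in> Z"
    then obtain a1 b1 s1 r1 a2 b2 s2 r2 where h:
      "a1 \<in> A" "b1 \<in> B" "s1 \<in> Rset" "s1 \<notin> M" "r1 \<in> Rset" "s1 * y1 = r1 * (a1 * b1)"
      "a2 \<in> A" "b2 \<in> B" "s2 \<in> Rset" "s2 \<notin> M" "r2 \<in> Rset" "s2 * y2 = r2 * (a2 * b2)"
      unfolding Z_def by blast
    have R: "a1 * b1 \<in> Rset" "a2 * b2 \<in> Rset" using h A B Rset_mult by blast+
    from VP[OF P M R] show "y1 + y2 \<in> Z"
    proof
      assume "D M (a1 * b1) (a2 * b2)"
      then obtain t q where tq: "t \<in> Rset" "t \<notin> M" "q \<in> Rset" "t * (a2 * b2) = q * (a1 * b1)"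
        unfolding D_def by blast
      from comb[OF h(3,4,5,6) h(9,10,11,12) tq]
      show ?thesis unfolding Z_def using h by blast
    next
      assume "D M (a2 * b2) (a1 * b1)"
      then obtain t q where tq: "t \<in> Rset" "t \<notin> M" "q \<in> Rset" "t * (a1 * b1) = q * (a2 * b2)"
        unfolding D_def by blast
      from comb[OF h(9,10,11,12) h(3,4,5,6) tq]
      have "\<exists>s\<in>Rset. s \<notin> M \<and> (\<exists>r\<in>Rset. s * (y2 + y1) = r * (a2 * b2))" .
      then show ?thesis unfolding Z_def using h by (simp add: add.commute) blast
    qed
  next
    fix c y :: "'a fract" assume c: "c \<in> Rset" and "y \<in> Z"
    then obtain a b s r where h: "a \<in> A" "b \<in> B" "s \<in> Rset" "s \<notin> M" "r \<in> Rset" "s * y = r * (a * b)"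
      unfolding Z_def by blast
    have "s * (c * y) = (c * r) * (a * b)" using h(6) by (metis mult.assoc mult.left_commute)
    moreover have "c * r \<in> Rset" using c h Rset_mult by blast
    ultimately show "c * y \<in> Z" unfolding Z_def using h by blast
  qed
  moreover have "{a * b |a b. a \<in> A \<and> b \<in> B} \<subseteq> Z"
  proof
    fix z assume "z \<in> {a * b |a b. a \<in> A \<and> b \<in> B}"
    then obtain a b where ab: "z = a * b" "a \<in> A" "b \<in> B" by blast
    have "1 * z = 1 * (a * b)" using ab by simp
    then show "z \<in> Z" unfolding Z_def using ab one by blast
  qed
  ultimately have "ideal_prod Rset A B \<subseteq> Z" unfolding ideal_prod_def by (rule span_sub)
  then show ?thesis using y unfolding Z_def by blast
qed

lemma POW:
  assumes I: "I \<subseteq> Rset" "0 \<in> I"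
  shows "w \<in> ideal_pow Rset I n \<Longrightarrow> \<exists>e\<in>I. \<exists>s\<in>Rset. s \<notin> M \<and> (\<exists>r\<in>Rset. s * w = r * e ^ n)"
proof (induction n arbitrary: w)
  case 0
  have "1 * w = w * 0 ^ 0" by simp
  then show ?case using 0 I maxt_basic(5)[OF M] Rset_1 by fastforce
next
  case (Suc n)
  have In: "ideal_pow Rset I n \<subseteq> Rset" "0 \<in> ideal_pow Rset I n"
    using pow_R[OF I(1)] Rmod_mem(1)[OF pow_Rmod] by auto
  have wp: "w \<in> ideal_prod Rset I (ideal_pow Rset I n)" using Suc.prems by simp
  obtain a b s r where h: "a \<in> I" "b \<in> ideal_pow Rset I n" "s \<in> Rset" "s \<notin> M" "r \<in> Rset"
    "s * w = r * (a * b)" using ST[OF I In wp] by blast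
  obtain e s' r' where h2: "e \<in> I" "s' \<in> Rset" "s' \<notin> M" "r' \<in> Rset" "s' * b = r' * e ^ n"
    using Suc.IH[OF h(2)] by blast
  have aeR: "a \<in> Rset" "e \<in> Rset" using h h2 I by auto
  from VP[OF P M aeR] show ?case
  proof
    assume "D M a e"
    then obtain t q where tq: "t \<in> Rset" "t \<notin> M" "q \<in> Rset" "t * e = q * a" unfolding D_def by blast
    have "(s * s' * t ^ n) * w = (r * r' * q ^ n) * a ^ Suc n"
    proof -
      have "(s * s' * t ^ n) * w = r * a * (s' * b) * t ^ n" using h(6) by (simp add: ac_simps)
      also have "\<dots> = r * a * r' * (t * e) ^ n" using h2(5) by (simp add: ac_simps power_mult_distrib)
      also have "\<dots> = (r * r' * q ^ n) * a ^ Suc n" using tq(4) by (simp add: ac_simps power_mult_distrib)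
      finally show ?thesis .
    qed
    moreover have u1: "s * s' \<in> Rset" "s * s' \<notin> M" using h(3,4) h2(2,3) Rset_mult SM_mult[OF M] by blast+
    moreover have u2: "t ^ n \<in> Rset" "t ^ n \<notin> M" using tq Rset_pow SM_pow[OF M] by blast+
    moreover have "s * s' * t ^ n \<in> Rset" "s * s' * t ^ n \<notin> M" using u1 u2 Rset_mult SM_mult[OF M] by blast+
    moreover have "r * r' * q ^ n \<in> Rset" using h(5) h2(4) tq(3) Rset_mult Rset_pow by blast
    ultimately show ?thesis using h(1) by blast
  next
    assume "D M e a"
    then obtain t q where tq: "t \<in> Rset" "t \<notin> M" "q \<in> Rset" "t * a = q * e" unfolding D_def by blast
    have "(s * s' * t) * w = (r * r' * q) * e ^ Suc n"
    proof -
      have "(s * s' * t) * w = r * (t * a) * (s' * b)" using h(6) by (simp add: ac_simps)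
      also have "\<dots> = (r * r' * q) * e ^ Suc n" using tq(4) h2(5) by (simp add: ac_simps)
      finally show ?thesis .
    qed
    moreover have u1: "s * s' \<in> Rset" "s * s' \<notin> M" using h(3,4) h2(2,3) Rset_mult SM_mult[OF M] by blast+
    moreover have "s * s' * t \<in> Rset" "s * s' * t \<notin> M" using u1 tq Rset_mult SM_mult[OF M] by blast+
    moreover have "r * r' * q \<in> Rset" using h(5) h2(4) tq(3) Rset_mult by blast
    ultimately show ?thesis using h2(1) by blast
  qed
qed

end

lemma alg:
  fixes c e s r T P Q T' Q' :: "'b::field"
  assumes c: "c \<noteq> 0"
    and A: "T * P * e ^ Suc n = Q * (c ^ 2) ^ Suc n"
    and B: "T' * P * c ^ Suc n = Q' * (c ^ 2) ^ Suc n"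
    and C: "s * c ^ (n + Suc n) = r * (P * e ^ n)"
  shows "s ^ Suc n * T' * T ^ n = r ^ Suc n * Q' * Q ^ n"
proof -
  have cN: "c ^ Suc n \<noteq> 0" "c ^ n \<noteq> 0" "c ^ (n + Suc n) \<noteq> 0" using c by simp_all
  have sq: "(c ^ 2) ^ Suc n = c ^ Suc n * c ^ Suc n" by (simp add: power_mult[symmetric] power_add[symmetric] mult_2)
  have B': "T' * P = Q' * c ^ Suc n"
  proof -
    have "(T' * P) * c ^ Suc n = (Q' * c ^ Suc n) * c ^ Suc n" using B sq by (simp add: ac_simps)
    then show ?thesis using cN(1) by simp
  qed
  have A': "T * s * e = r * Q * c"
  proof -
    have "(T * s * e) * c ^ (n + Suc n) = T * e * (s * c ^ (n + Suc n))" by (simp add: ac_simps)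
    also have "\<dots> = r * (T * P * e ^ Suc n)" using C by (simp add: ac_simps)
    also have "\<dots> = r * Q * (c ^ Suc n * c ^ Suc n)" using A sq by (simp add: ac_simps)
    also have "\<dots> = (r * Q * c) * c ^ (n + Suc n)" by (simp add: power_add ac_simps)
    finally show ?thesis using cN(3) by simp
  qed
  have C': "s * T' * c ^ n = r * Q' * e ^ n"
  proof -
    have "(s * T' * c ^ n) * c ^ Suc n = T' * (s * c ^ (n + Suc n))" by (simp add: power_add ac_simps)
    also have "\<dots> = r * (T' * P) * e ^ n" using C by (simp add: ac_simps)
    also have "\<dots> = (r * Q' * e ^ n) * c ^ Suc n" using B' by (simp add: ac_simps)
    finally show ?thesis using cN(1) by simp
  qed
  have "(s ^ Suc n * T' * T ^ n) * c ^ n = (s * T' * c ^ n) * (T * s) ^ n" by (simp add: power_mult_distrib ac_simps)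
  also have "\<dots> = r * Q' * (T * s * e) ^ n" using C' by (simp add: power_mult_distrib ac_simps)
  also have "\<dots> = (r ^ Suc n * Q' * Q ^ n) * c ^ n" using A' by (simp add: power_mult_distrib ac_simps)
  finally show ?thesis using c by simp
qed

context
  fixes M :: "'a::idom fract set"
  assumes P: "PvMD TYPE('a)" and M: "max_t_ideal M"
begin

lemma H1':
  assumes I: "is_ideal I" and J: "is_ideal J"
    and H1: "\<forall>y\<in>ideal_pow Rset I (n + 1). \<exists>s\<in>Rset. s \<notin> M \<and> s * y \<in> ideal_prod Rset J (ideal_pow Rset I n)"
    and c: "c \<in> I" and e: "e \<in> I"
  shows "\<exists>j\<in>J. \<exists>e'\<in>I. \<exists>s\<in>Rset. s \<notin> M \<and> (\<exists>r\<in>Rset. s * (c * e ^ n) = r * (j * e' ^ n))"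
proof -
  have IR: "I \<subseteq> Rset" "0 \<in> I" "Rmod Rset I" using I is_ideal_iff Rmod_mem(1) by auto
  have JR: "J \<subseteq> Rset" "0 \<in> J" using J is_ideal_iff Rmod_mem(1) by auto
  have In: "ideal_pow Rset I n \<subseteq> Rset" "0 \<in> ideal_pow Rset I n"
    using pow_R[OF IR(1)] Rmod_mem(1)[OF pow_Rmod] by auto
  have "c * e ^ n \<in> ideal_pow Rset I (n + 1)" using prod_mem[OF c pow_mem[OF e]] by simp
  then obtain s where s: "s \<in> Rset" "s \<notin> M" "s * (c * e ^ n) \<in> ideal_prod Rset J (ideal_pow Rset I n)"
    using H1 by blast
  obtain j w s1 r1 where h1: "j \<in> J" "w \<in> ideal_pow Rset I n" "s1 \<in> Rset" "s1 \<notin> M" "r1 \<in> Rset"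
    "s1 * (s * (c * e ^ n)) = r1 * (j * w)" using ST[OF P M JR In s(3)] by blast
  obtain e' s2 r2 where h2: "e' \<in> I" "s2 \<in> Rset" "s2 \<notin> M" "r2 \<in> Rset" "s2 * w = r2 * e' ^ n"
    using POW[OF P M IR(1,2) h1(2)] by blast
  have "(s2 * s1 * s) * (c * e ^ n) = (r1 * r2) * (j * e' ^ n)"
  proof -
    have "(s2 * s1 * s) * (c * e ^ n) = s2 * (s1 * (s * (c * e ^ n)))" by (simp add: ac_simps)
    also have "\<dots> = r1 * j * (s2 * w)" using h1(6) by (simp add: ac_simps)
    also have "\<dots> = (r1 * r2) * (j * e' ^ n)" using h2(5) by (simp add: ac_simps)
    finally show ?thesis .
  qed
  moreover have u: "s2 * s1 \<in> Rset" "s2 * s1 \<notin> M" using h1(3,4) h2(2,3) Rset_mult SM_mult[OF M] by blast+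
  moreover have "s2 * s1 * s \<in> Rset" "s2 * s1 * s \<notin> M" using u s(1,2) Rset_mult SM_mult[OF M] by blast+
  moreover have "r1 * r2 \<in> Rset" using h1(5) h2(4) Rset_mult by blast
  ultimately show ?thesis using h1(1) h2(1) by blast
qed

lemma ITER:
  assumes I: "is_ideal I" and J: "is_ideal J"
    and H1: "\<forall>y\<in>ideal_pow Rset I (n + 1). \<exists>s\<in>Rset. s \<notin> M \<and> s * y \<in> ideal_prod Rset J (ideal_pow Rset I n)"
    and c: "c \<in> I"
  shows "\<exists>js. (\<forall>i<k. js i \<in> J) \<and> (\<exists>e\<in>I. \<exists>s\<in>Rset. s \<notin> M \<and> (\<exists>r\<in>Rset. s * c ^ (n + k) = r * ((\<Prod>i<k. js i) * e ^ n)))"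
proof (induction k)
  case 0
  have "1 * c ^ (n + 0) = 1 * ((\<Prod>i<(0::nat). (\<lambda>_. 0) i) * c ^ n)" by (simp add: lessThan_0)
  then show ?case using c maxt_basic(5)[OF M] Rset_1 by blast
next
  case (Suc k)
  then obtain js e s r where h: "\<forall>i<k. js i \<in> J" "e \<in> I" "s \<in> Rset" "s \<notin> M" "r \<in> Rset"
    "s * c ^ (n + k) = r * ((\<Prod>i<k. js i) * e ^ n)" by blast
  obtain j e' t q where h2: "j \<in> J" "e' \<in> I" "t \<in> Rset" "t \<notin> M" "q \<in> Rset" "t * (c * e ^ n) = q * (j * e' ^ n)"
    using H1'[OF I J H1 c h(2)] by blast
  define js' where "js' = js(k := j)"
  have pr: "(\<Prod>i<Suc k. js' i) = (\<Prod>i<k. js i) * j"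
  proof -
    have "(\<Prod>i<k. js' i) = (\<Prod>i<k. js i)" unfolding js'_def by (rule prod.cong) auto
    then show ?thesis by (simp add: js'_def)
  qed
  have "(t * s) * c ^ (n + Suc k) = (r * q) * ((\<Prod>i<Suc k. js' i) * e' ^ n)"
  proof -
    have "(t * s) * c ^ (n + Suc k) = t * c * (s * c ^ (n + k))" by (simp add: ac_simps)
    also have "\<dots> = r * (\<Prod>i<k. js i) * (t * (c * e ^ n))" using h(6) by (simp add: ac_simps)
    also have "\<dots> = (r * q) * ((\<Prod>i<k. js i) * j * e' ^ n)" using h2(6) by (simp add: ac_simps)
    finally show ?thesis using pr by simp
  qed
  moreover have "t * s \<in> Rset" "t * s \<notin> M" using h(3,4) h2(3,4) Rset_mult SM_mult[OF M] by blast+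
  moreover have "r * q \<in> Rset" using h(5) h2(5) Rset_mult by blast
  moreover have "\<forall>i<Suc k. js' i \<in> J" using h(1) h2(1) unfolding js'_def by auto
  ultimately show ?case using h2(2) by blast
qed

end


lemma prodid:
  fixes t js m :: "nat \<Rightarrow> 'b::comm_ring_1"
  assumes "\<forall>i<N. t i * (js i * e) = m i * c"
  shows "(\<Prod>i<N. t i) * (\<Prod>i<N. js i) * e ^ N = (\<Prod>i<N. m i) * c ^ N"
proof -
  have "(\<Prod>i<N. t i * (js i * e)) = (\<Prod>i<N. m i * c)" using assms by (intro prod.cong) auto
  then show ?thesis by (simp add: prod.distrib mult.assoc)
qed

context
  fixes M :: "'a::idom fract set"
  assumes P: "PvMD TYPE('a)" and M: "max_t_ideal M"
begin

lemma VL: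
  assumes I: "is_ideal I" and J: "is_ideal J"
    and H1: "\<forall>y\<in>ideal_pow Rset I (n + 1). \<exists>s\<in>Rset. s \<notin> M \<and> s * y \<in> ideal_prod Rset J (ideal_pow Rset I n)"
    and c: "c \<in> I"
  shows "\<exists>s\<in>Rset. s \<notin> M \<and> s * c ^ 2 \<in> ideal_prod Rset J I"
proof (rule ccontr)
  assume bad: "\<not> ?thesis"
  define JI where "JI = ideal_prod Rset J I"
  have JIm: "Rmod Rset JI" unfolding JI_def by (rule Rmod_prod)
  have IR: "I \<subseteq> Rset" using I is_ideal_iff by auto
  have JR: "J \<subseteq> Rset" using J is_ideal_iff by auto
  have one: "1 \<in> Rset" "1 \<notin> M" using maxt_basic(5)[OF M] by auto
  have MR: "M \<subseteq> Rset" using maxt_basic(3)[OF M] .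
  have cnz: "c \<noteq> 0"
  proof
    assume "c = 0"
    then have "1 * c ^ 2 \<in> JI" using Rmod_mem(1)[OF JIm] by simp
    then show False using bad one unfolding JI_def by blast
  qed
  have cR: "c \<in> Rset" "c ^ 2 \<in> Rset" using c IR Rset_pow by auto
  have bad': "\<exists>t m. t \<in> Rset \<and> t \<notin> M \<and> m \<in> M \<and> t * (j * e') = m * c ^ 2" if je: "j \<in> J" "e' \<in> I" for j e'
  proof -
    have jeR: "j * e' \<in> Rset" using je IR JR Rset_mult by blast
    have jeJI: "j * e' \<in> JI" unfolding JI_def by (rule prod_mem[OF je])
    from VP[OF P M jeR cR(2)] show ?thesis
    proof
      assume "D M (j * e') (c ^ 2)"
      then obtain s r where sr: "s \<in> Rset" "s \<notin> M" "r \<in> Rset" "s * c ^ 2 = r * (j * e')" unfolding D_def by blast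
      have "r * (j * e') \<in> JI" by (rule Rmod_mem(3)[OF JIm sr(3) jeJI])
      then show ?thesis using bad sr unfolding JI_def by auto
    next
      assume "D M (c ^ 2) (j * e')"
      then obtain t q where tq: "t \<in> Rset" "t \<notin> M" "q \<in> Rset" "t * (j * e') = q * c ^ 2" unfolding D_def by blast
      have "q \<in> M"
      proof (rule ccontr)
        assume "q \<notin> M"
        have "t * (j * e') \<in> JI" by (rule Rmod_mem(3)[OF JIm tq(1) jeJI])
        then have "q * c ^ 2 \<in> JI" using tq(4) by simp
        then show False using bad tq(3) \<open>q \<notin> M\<close> unfolding JI_def by blast
      qed
      then show ?thesis using tq by blast
    qed
  qed
  obtain js e s r where it: "\<forall>i<Suc n. js i \<in> J" "e \<in> I" "s \<in> Rset" "s \<notin> M" "r \<in> Rset"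
    "s * c ^ (n + Suc n) = r * ((\<Prod>i<Suc n. js i) * e ^ n)"
    using ITER[OF P M I J H1 c, of "Suc n"] by blast
  have "\<forall>i\<in>{..<Suc n}. \<exists>p. fst p \<in> Rset \<and> fst p \<notin> M \<and> snd p \<in> M \<and> fst p * (js i * e) = snd p * c ^ 2"
    using bad'[OF _ it(2)] it(1) by fastforce
  from bchoice[OF this] obtain p where p:
    "\<forall>i\<in>{..<Suc n}. fst (p i) \<in> Rset \<and> fst (p i) \<notin> M \<and> snd (p i) \<in> M \<and> fst (p i) * (js i * e) = snd (p i) * c ^ 2"
    by blast
  have "\<forall>i\<in>{..<Suc n}. \<exists>p. fst p \<in> Rset \<and> fst p \<notin> M \<and> snd p \<in> M \<and> fst p * (js i * c) = snd p * c ^ 2"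
    using bad'[OF _ c] it(1) by fastforce
  from bchoice[OF this] obtain p' where p':
    "\<forall>i\<in>{..<Suc n}. fst (p' i) \<in> Rset \<and> fst (p' i) \<notin> M \<and> snd (p' i) \<in> M \<and> fst (p' i) * (js i * c) = snd (p' i) * c ^ 2"
    by blast
  define T where "T = (\<Prod>i<Suc n. fst (p i))"
  define Q where "Q = (\<Prod>i<Suc n. snd (p i))"
  define T' where "T' = (\<Prod>i<Suc n. fst (p' i))"
  define Q' where "Q' = (\<Prod>i<Suc n. snd (p' i))"
  define PP where "PP = (\<Prod>i<Suc n. js i)"
  have A: "T * PP * e ^ Suc n = Q * (c ^ 2) ^ Suc n" unfolding T_def Q_def PP_def
    by (rule prodid) (use p in auto)
  have B: "T' * PP * c ^ Suc n = Q' * (c ^ 2) ^ Suc n" unfolding T'_def Q'_def PP_def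
    by (rule prodid) (use p' in auto)
  have C: "s * c ^ (n + Suc n) = r * (PP * e ^ n)" using it(6) unfolding PP_def .
  have eq: "s ^ Suc n * T' * T ^ n = r ^ Suc n * Q' * Q ^ n" by (rule alg[OF cnz A B C])
  have TT1: "T \<in> Rset" unfolding T_def by (rule Rset_prod) (use p in auto)
  have TT2: "T \<notin> M" unfolding T_def by (rule SM_prod[OF M]) (use p in auto)
  have TT'1: "T' \<in> Rset" unfolding T'_def by (rule Rset_prod) (use p' in auto)
  have TT'2: "T' \<notin> M" unfolding T'_def by (rule SM_prod[OF M]) (use p' in auto)
  note TT = TT1 TT2 and TT' = TT'1 TT'2
  have QR: "Q \<in> Rset" unfolding Q_def using p MR by (intro Rset_prod) auto
  have Q'M: "Q' \<in> M" unfolding Q'_def using p' MR by (intro M_prod[OF M]) auto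
  have l1: "s ^ Suc n \<in> Rset" "s ^ Suc n \<notin> M" using it(3,4) Rset_pow SM_pow[OF M] by blast+
  have l2: "T ^ n \<in> Rset" "T ^ n \<notin> M" using TT Rset_pow SM_pow[OF M] by blast+
  have l3: "s ^ Suc n * T' \<in> Rset" "s ^ Suc n * T' \<notin> M" using l1 TT' Rset_mult SM_mult[OF M] by blast+
  have lhs: "s ^ Suc n * T' * T ^ n \<notin> M" using l3 l2 SM_mult[OF M] by blast
  have rR: "r ^ Suc n * Q ^ n \<in> Rset" using it(5) QR Rset_pow Rset_mult by blast
  have "(r ^ Suc n * Q ^ n) * Q' \<in> M" by (rule Rmod_mem(3)[OF maxt_basic(2)[OF M] rR Q'M])
  then have "r ^ Suc n * Q' * Q ^ n \<in> M" by (simp add: ac_simps)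
  then show False using lhs eq by simp
qed

end


theorem lemma2p2:
  fixes I J :: "'a::idom fract set"
  assumes "PvMD TYPE('a)"
    and "is_ideal I" and "is_ideal J" and "J \<subseteq> I" and "I \<noteq> {0}" and "J \<noteq> {0}"
  shows "((\<exists>n\<ge>1. t_op (ideal_prod Rset J (ideal_pow Rset I n)) = t_op (ideal_pow Rset I (n + 1)))
           \<longleftrightarrow> (\<forall>M. max_t_ideal M \<longrightarrow>
                 ideal_prod (loc M) (ext_loc M J) (ext_loc M I) = ideal_pow (loc M) (ext_loc M I) 2))
       \<and> ((\<forall>M. max_t_ideal M \<longrightarrow>
                 ideal_prod (loc M) (ext_loc M J) (ext_loc M I) = ideal_pow (loc M) (ext_loc M I) 2)
           \<longleftrightarrow> t_op (ideal_prod Rset J I) = t_op (ideal_pow Rset I 2))"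
proof -
  note P = assms(1)
  have I: "is_ideal I" and J: "is_ideal J" and JI0: "J \<subseteq> I" using assms by auto
  have Irm: "Rmod Rset I" "I \<subseteq> Rset" using I is_ideal_iff by auto
  have Jrm: "Rmod Rset J" "J \<subseteq> Rset" using J is_ideal_iff by auto
  define II where "II = ideal_prod Rset I I"
  define JI where "JI = ideal_prod Rset J I"
  have pow2: "ideal_pow Rset I 2 = II" unfolding II_def by (rule pow2_R[OF Irm(1)])
  have JIsub: "JI \<subseteq> II" unfolding JI_def II_def ideal_prod_def
    by (rule span_mono) (use JI0 in blast)
  have JIrm: "Rmod Rset JI" unfolding JI_def by (rule Rmod_prod)
  have IIrm: "Rmod Rset II" unfolding II_def by (rule Rmod_prod)
  have prodR: "ideal_prod Rset A B \<subseteq> Rset" if "A \<subseteq> Rset" "B \<subseteq> Rset" for A B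
    unfolding ideal_prod_def by (rule span_sub[OF Rmod_Rset]) (use that Rset_mult in blast)
  have JIid: "is_ideal JI" unfolding is_ideal_iff JI_def using Rmod_prod prodR Irm Jrm by blast
  have IIid: "is_ideal II" unfolding is_ideal_iff II_def using Rmod_prod prodR Irm by blast
  define Loc where "Loc M \<longleftrightarrow> (\<forall>z\<in>II. \<exists>s\<in>Rset. s \<notin> M \<and> s * z \<in> JI)" for M
  have LE: "ideal_prod (loc M) (ext_loc M J) (ext_loc M I) = ideal_pow (loc M) (ext_loc M I) 2 \<longleftrightarrow> Loc M"
    if M: "max_t_ideal M" for M
  proof -
    have "ideal_prod (loc M) (ext_loc M J) (ext_loc M I) = fr M JI"
      unfolding ext_loc_fr[OF M Irm(1)] ext_loc_fr[OF M Jrm(1)] JI_def by (rule prod_loc[OF M Jrm(1) Irm(1)])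
    moreover have "ideal_pow (loc M) (ext_loc M I) 2 = fr M II"
      unfolding ext_loc_fr[OF M Irm(1)] II_def by (rule pow2_loc[OF M Irm(1)])
    ultimately show ?thesis unfolding Loc_def using FR_EQ[OF M JIsub JIrm] by simp
  qed
  have P3L: "Loc M" if M: "max_t_ideal M" and H: "t_op JI = t_op II" for M
    unfolding Loc_def
  proof
    fix z assume "z \<in> II"
    then have "z \<in> t_op JI" using sub_t[OF IIrm] H by blast
    then show "\<exists>s\<in>Rset. s \<notin> M \<and> s * z \<in> JI" by (rule LOC[OF P M JIid])
  qed
  have LP3: "t_op JI = t_op II" if H: "\<forall>M. max_t_ideal M \<longrightarrow> Loc M"
  proof
    show "t_op JI \<subseteq> t_op II" by (rule t_op_mono[OF JIsub])
    have "II \<subseteq> t_op JI"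
    proof
      fix z assume z: "z \<in> II"
      show "z \<in> t_op JI" by (rule GLOB[OF JIid]) (use H z in \<open>auto simp: Loc_def\<close>)
    qed
    then have "t_op II \<subseteq> t_op (t_op JI)" by (rule t_op_mono)
    then show "t_op II \<subseteq> t_op JI" using t_idem[OF JIrm] by simp
  qed
  have P1L: "Loc M" if M: "max_t_ideal M"
    and H: "t_op (ideal_prod Rset J (ideal_pow Rset I n)) = t_op (ideal_pow Rset I (n + 1))" for M n
  proof -
    have JInid: "is_ideal (ideal_prod Rset J (ideal_pow Rset I n))"
      unfolding is_ideal_iff using Rmod_prod prodR Jrm pow_R[OF Irm(2)] by blast
    have H1: "\<forall>y\<in>ideal_pow Rset I (n + 1). \<exists>s\<in>Rset. s \<notin> M \<and> s * y \<in> ideal_prod Rset J (ideal_pow Rset I n)"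
    proof
      fix y assume "y \<in> ideal_pow Rset I (n + 1)"
      then have "y \<in> t_op (ideal_prod Rset J (ideal_pow Rset I n))" using sub_t[OF pow_Rmod] H by blast
      then show "\<exists>s\<in>Rset. s \<notin> M \<and> s * y \<in> ideal_prod Rset J (ideal_pow Rset I n)" by (rule LOC[OF P M JInid])
    qed
    have VLc: "\<exists>s\<in>Rset. s \<notin> M \<and> s * c ^ 2 \<in> JI" if "c \<in> I" for c
      unfolding JI_def by (rule VL[OF P M I J H1 that])
    show ?thesis unfolding Loc_def
    proof
      fix z assume "z \<in> II"
      then have "z \<in> ideal_pow Rset I 2" using pow2 by simp
      then obtain e s r where h: "e \<in> I" "s \<in> Rset" "s \<notin> M" "r \<in> Rset" "s * z = r * e ^ 2"
        using POW[OF P M Irm(2) Rmod_mem(1)[OF Irm(1)]] by blast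
      obtain t where t: "t \<in> Rset" "t \<notin> M" "t * e ^ 2 \<in> JI" using VLc[OF h(1)] by blast
      have "(t * s) * z = r * (t * e ^ 2)" using h(5) by (simp add: ac_simps)
      moreover have "r * (t * e ^ 2) \<in> JI" by (rule Rmod_mem(3)[OF JIrm h(4) t(3)])
      moreover have "t * s \<in> Rset" "t * s \<notin> M" using t h Rset_mult SM_mult[OF M] by blast+
      ultimately show "\<exists>s\<in>Rset. s \<notin> M \<and> s * z \<in> JI" by metis
    qed
  qed
  have P3P1: "t_op (ideal_prod Rset J (ideal_pow Rset I 1)) = t_op (ideal_pow Rset I (1 + 1))"
    if H: "t_op JI = t_op II"
  proof -
    have "ideal_pow Rset I 1 = I" using prod_R[OF Irm(1)] by simp
    then have "ideal_prod Rset J (ideal_pow Rset I 1) = JI" unfolding JI_def by simp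
    moreover have "ideal_pow Rset I (1 + 1) = II" using pow2 by (simp add: numeral_2_eq_2)
    ultimately show ?thesis using H by simp
  qed
  have e2: "(\<forall>M. max_t_ideal M \<longrightarrow>
                 ideal_prod (loc M) (ext_loc M J) (ext_loc M I) = ideal_pow (loc M) (ext_loc M I) 2)
        \<longleftrightarrow> (\<forall>M. max_t_ideal M \<longrightarrow> Loc M)" using LE by blast
  have e3: "t_op (ideal_prod Rset J I) = t_op (ideal_pow Rset I 2) \<longleftrightarrow> t_op JI = t_op II"
    unfolding JI_def pow2 ..
  show ?thesis unfolding e2 e3
  proof (intro conjI iffI)
    assume "\<exists>n\<ge>1. t_op (ideal_prod Rset J (ideal_pow Rset I n)) = t_op (ideal_pow Rset I (n + 1))"
    then obtain n where "t_op (ideal_prod Rset J (ideal_pow Rset I n)) = t_op (ideal_pow Rset I (n + 1))" by blast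
    then show "\<forall>M. max_t_ideal M \<longrightarrow> Loc M" using P1L by blast
  next
    assume "\<forall>M. max_t_ideal M \<longrightarrow> Loc M"
    then have "t_op JI = t_op II" by (rule LP3)
    then show "\<exists>n\<ge>1. t_op (ideal_prod Rset J (ideal_pow Rset I n)) = t_op (ideal_pow Rset I (n + 1))"
      using P3P1 by (intro exI[of _ 1]) simp
  next
    assume "\<forall>M. max_t_ideal M \<longrightarrow> Loc M"
    then show "t_op JI = t_op II" by (rule LP3)
  next
    assume "t_op JI = t_op II"
    then show "\<forall>M. max_t_ideal M \<longrightarrow> Loc M" using P3L by blast
  qed
qed



end
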